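(* Let $k>0$, $d>0$, $a>0$. There exists $\Lambda>0$ such that for every $\lambda\in\mathbb{R}$ with $|\lambda|>\Lambda$ there is no $\mu\in\mathbb{C}$ with $\mathrm{Re}\,\mu\ge0$ satisfying $$\frac12\int_{-1}^{1}\frac{1-k+\mathrm{i}\,\frac{a\lambda s}{1+d\lambda^2}}{1+k\mu+\mathrm{i}k\lambda s}\,ds=1 .$$ In other words, the linearized system (L) has no non-decaying Fourier modes at high frequency: the set of wave numbers that carry unstable modes is bounded.
   Context: Let $S^2\subset\mathbb{R}^3$ be the unit sphere, with surface measure $d\Omega$ (total mass $4\pi$). Write $\mathbf{v}=(v_1,v_2,v_3)\in S^2$ and $x\in\mathbb{R}$. Fix parameters $k>0$, $d>0$, and $a=F'(0)>0$. The linearized system (L), for the unknowns $g(x,\mathbf v)$ and $S_g(x)$ and a growth rate $\mu\in\mathbb{C}$, is $$k(\mu g+v_1\partial_x g)=\rho_g+a\,v_1\partial_x S_g-g-k\rho_g,\qquad -d\,\partial_{xx}S_g+S_g=\rho_g,\qquad \rho_g=\frac1{4\pi}\int_{S^2}g\,d\Omega .$$ A nonzero solution of (L) of the form $g=\hat g(\mathbf v)e^{\mathrm{i}\lambda x}$ with growth rate $\mu$ (where $\mathrm{Re}\,\mu>-1/k$) exists exactly when $\mu$ satisfies the displayed dispersion relation. *)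

theory Defs
  imports "HOL-Analysis.Analysis"
begin

definition dispersion :: "real \<Rightarrow> real \<Rightarrow> real \<Rightarrow> real \<Rightarrow> complex \<Rightarrow> complex" where
  "dispersion k d a lam mu =
     (1/2) * integral {-1..1::real}
       (\<lambda>s. (complex_of_real (1 - k) + \<i> * complex_of_real (a * lam * s / (1 + d * lam\<^sup>2)))
            / (1 + complex_of_real k * mu + \<i> * complex_of_real (k * lam * s)))"

end

theory Submission
  imports Defs
begin

lemma key:
  fixes k d a lam :: real and mu :: complex
  assumes k: "k > 0" and d: "d > 0" and a: "a > 0" and lam: "lam \<noteq> 0" and mu: "Re mu \<ge> 0"
  shows "Re (dispersion k d a lam mu) \<le> (\<bar>1-k\<bar> * pi / (k*\<bar>lam\<bar>) + 2*\<bar>a * lam / (1 + d * lam\<^sup>2)\<bar>) / 2"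
proof -
  define b where "b = a * lam / (1 + d * lam\<^sup>2)"
  define A where "A = 1 + k * Re mu"
  define q where "q = Im mu"
  define c where "c = k * lam"
  define w where "w = (\<lambda>(s::real). k*q + c* s)"
  define f where "f = (\<lambda>(s::real). (complex_of_real (1 - k) + \<i> * complex_of_real (a * lam * s / (1 + d * lam\<^sup>2)))
            / (1 + complex_of_real k * mu + \<i> * complex_of_real (k * lam * s)))"
  have A1: "A \<ge> 1" using k mu by (simp add: A_def)
  have c0: "c \<noteq> 0" using k lam by (simp add: c_def)
  have Dnz: "1 + complex_of_real k * mu + \<i> * complex_of_real (k * lam * s) \<noteq> 0" for s
  proof
    assume "1 + complex_of_real k * mu + \<i> * complex_of_real (k * lam * s) = 0"
    then have "Re (1 + complex_of_real k * mu + \<i> * complex_of_real (k * lam * s)) = 0" by simp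
    then show False using A1 by (simp add: A_def)
  qed
  have dl: "1 + d * lam\<^sup>2 \<noteq> 0" using d by (smt (verit) mult_nonneg_nonneg zero_le_power2)
  have cont: "continuous_on {-1..1} f"
    unfolding f_def by (intro continuous_intros) (use Dnz dl in auto)
  have int: "(f has_integral integral {-1..1} f) {-1..1}"
    using integrable_continuous_interval[OF cont] by (simp add: has_integral_integral)
  have ReI: "((\<lambda>s. Re (f s)) has_integral Re (integral {-1..1} f)) {-1..1}"
    using has_integral_Re[OF int] .
  have Ref: "Re (f s) = ((1-k)*A + b* s*w s) / (A\<^sup>2 + (w s)\<^sup>2)" for s
  proof -
    have n: "complex_of_real (1 - k) + \<i> * complex_of_real (a * lam * s / (1 + d * lam\<^sup>2)) = Complex (1-k) (b * s)"
      by (simp add: complex_eq_iff b_def)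
    have dd: "1 + complex_of_real k * mu + \<i> * complex_of_real (k * lam * s) = Complex A (w s)"
      by (simp add: complex_eq_iff A_def w_def q_def c_def)
    have "f s = Complex (1-k) (b * s) / Complex A (w s)"
      unfolding f_def using n dd by simp
    then show ?thesis
      by (simp add: Complex_divide power2_eq_square add_divide_distrib)
  qed
  define g where "g = (\<lambda>s. \<bar>1-k\<bar> * (A / (A\<^sup>2 + (w s)\<^sup>2)) + \<bar>b\<bar>)"
  have le: "Re (f s) \<le> g s" if s: "s \<in> {-1..1}" for s
  proof -
    have pos: "A\<^sup>2 + (w s)\<^sup>2 > 0" using A1 by (simp add: add_pos_nonneg)
    have t1: "(1-k)*A \<le> \<bar>1-k\<bar> * A" using A1 by (simp add: mult_right_mono)
    have "\<bar>w s\<bar> * 2 \<le> A\<^sup>2 + (w s)\<^sup>2"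
    proof -
      have "0 \<le> (\<bar>w s\<bar> - 1)\<^sup>2" by simp
      moreover have "1 \<le> A\<^sup>2" using A1 by (simp add: one_le_power)
      moreover have "(\<bar>w s\<bar> - 1)\<^sup>2 = (w s)\<^sup>2 - \<bar>w s\<bar> * 2 + 1"
        by (simp add: power2_eq_square algebra_simps)
      ultimately show ?thesis by linarith
    qed
    moreover have "\<bar>s\<bar> * \<bar>w s\<bar> \<le> \<bar>w s\<bar>"
      using s by (intro mult_left_le_one_le) auto
    ultimately have e1: "\<bar>s\<bar> * \<bar>w s\<bar> \<le> A\<^sup>2 + (w s)\<^sup>2" using abs_ge_zero[of "w s"] by linarith
    have "b * s * w s \<le> \<bar>b * s * w s\<bar>" by (rule abs_ge_self)
    also have "\<dots> = \<bar>b\<bar> * (\<bar>s\<bar> * \<bar>w s\<bar>)" by (simp add: abs_mult)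
    also have "\<dots> \<le> \<bar>b\<bar> * (A\<^sup>2 + (w s)\<^sup>2)" using e1 by (intro mult_left_mono) auto
    finally have t2: "b * s * w s \<le> \<bar>b\<bar> * (A\<^sup>2 + (w s)\<^sup>2)" .
    have "(1-k)*A + b* s*w s \<le> \<bar>1-k\<bar> * A + \<bar>b\<bar> * (A\<^sup>2 + (w s)\<^sup>2)" using t1 t2 by linarith
    then have "((1-k)*A + b* s*w s) / (A\<^sup>2 + (w s)\<^sup>2) \<le> (\<bar>1-k\<bar> * A + \<bar>b\<bar> * (A\<^sup>2 + (w s)\<^sup>2)) / (A\<^sup>2 + (w s)\<^sup>2)"
      using pos by (simp add: divide_right_mono)
    also have "\<dots> = g s" using pos A1 by (simp add: g_def add_divide_distrib)
    finally show ?thesis by (simp add: Ref)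
  qed
  define G where "G = (\<lambda>s. \<bar>1-k\<bar> * arctan (w s / A) / c + \<bar>b\<bar> * s)"
  have der: "(G has_vector_derivative g s) (at s within {-1..1})" for s
  proof -
    have "(G has_real_derivative (\<bar>1-k\<bar> * (inverse (1 + (w s / A)\<^sup>2) * (c / A)) / c + \<bar>b\<bar> * 1)) (at s within {-1..1})"
      unfolding G_def w_def by (intro derivative_eq_intros) (use A1 c0 in auto)
    moreover have "\<bar>1-k\<bar> * (inverse (1 + (w s / A)\<^sup>2) * (c / A)) / c + \<bar>b\<bar> * 1 = g s"
    proof -
      have P0: "A\<^sup>2 + (w s)\<^sup>2 > 0" using A1 by (simp add: add_pos_nonneg)
      have "1 + (w s / A)\<^sup>2 = (A\<^sup>2 + (w s)\<^sup>2) / A\<^sup>2" using A1 by (simp add: power_divide field_simps)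
      then have "inverse (1 + (w s / A)\<^sup>2) = A\<^sup>2 / (A\<^sup>2 + (w s)\<^sup>2)" by simp
      then have h: "inverse (1 + (w s / A)\<^sup>2) * (c / A) / c = A / (A\<^sup>2 + (w s)\<^sup>2)"
        using A1 c0 P0 by (simp add: power2_eq_square)
      have "\<bar>1-k\<bar> * (inverse (1 + (w s / A)\<^sup>2) * (c / A)) / c = \<bar>1-k\<bar> * (inverse (1 + (w s / A)\<^sup>2) * (c / A) / c)"
        by (rule times_divide_eq_right[symmetric])
      also have "\<dots> = \<bar>1-k\<bar> * (A / (A\<^sup>2 + (w s)\<^sup>2))" by (simp only: h)
      finally show ?thesis by (simp add: g_def)
    qed
    ultimately show ?thesis by (simp add: has_real_derivative_iff_has_vector_derivative)
  qed
  have gI: "(g has_integral (G 1 - G (-1))) {-1..1}"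
    by (rule fundamental_theorem_of_calculus) (auto intro: der)
  have "Re (integral {-1..1} f) \<le> G 1 - G (-1)"
    by (rule has_integral_le[OF ReI gI le])
  also have "G 1 - G (-1) = \<bar>1-k\<bar> * (arctan (w 1 / A) - arctan (w (-1) / A)) / c + 2*\<bar>b\<bar>"
    by (simp add: G_def diff_divide_distrib right_diff_distrib)
  also have "\<dots> \<le> \<bar>1-k\<bar> * pi / (k*\<bar>lam\<bar>) + 2*\<bar>b\<bar>"
  proof -
    have "\<bar>arctan (w 1 / A) - arctan (w (-1) / A)\<bar> \<le> pi"
      using arctan_bounded[of "w 1 / A"] arctan_bounded[of "w (-1) / A"] by linarith
    then have bd: "\<bar>1-k\<bar> * \<bar>arctan (w 1 / A) - arctan (w (-1) / A)\<bar> \<le> \<bar>1-k\<bar> * pi"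
      by (intro mult_left_mono) auto
    have "\<bar>1-k\<bar> * (arctan (w 1 / A) - arctan (w (-1) / A)) / c \<le> \<bar>\<bar>1-k\<bar> * (arctan (w 1 / A) - arctan (w (-1) / A)) / c\<bar>"
      by (rule abs_ge_self)
    also have "\<dots> = \<bar>1-k\<bar> * \<bar>arctan (w 1 / A) - arctan (w (-1) / A)\<bar> / \<bar>c\<bar>"
      by (simp add: abs_mult)
    also have "\<dots> \<le> \<bar>1-k\<bar> * pi / \<bar>c\<bar>"
      using bd by (intro divide_right_mono) auto
    finally have "\<bar>1-k\<bar> * (arctan (w 1 / A) - arctan (w (-1) / A)) / c \<le> \<bar>1-k\<bar> * pi / \<bar>c\<bar>" .
    then show ?thesis using k by (simp add: c_def abs_mult)
  qed
  finally have "Re (integral {-1..1} f) \<le> \<bar>1-k\<bar> * pi / (k*\<bar>lam\<bar>) + 2*\<bar>b\<bar>" .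
  then show ?thesis unfolding dispersion_def f_def[symmetric] b_def[symmetric] by simp
qed

theorem mainTheorem3:
  fixes k d a :: real
  assumes "k > 0" and "d > 0" and "a > 0"
  shows "\<exists>\<Lambda>>0. \<forall>lam::real. \<bar>lam\<bar> > \<Lambda> \<longrightarrow>
           \<not> (\<exists>mu::complex. Re mu \<ge> 0 \<and> dispersion k d a lam mu = 1)"
proof -
  define X where "X = \<bar>1-k\<bar> * pi / k"
  have X0: "X \<ge> 0" using assms by (simp add: X_def)
  define L where "L = X + 2*a/d + 1"
  have "2*a/d > 0" using assms by simp
  then have L0: "L > 0" using X0 by (simp add: L_def)
  show ?thesis
  proof (intro exI[of _ L] conjI allI impI L0 notI)
    fix lam :: real
    assume lam: "\<bar>lam\<bar> > L"
    assume "\<exists>mu. Re mu \<ge> 0 \<and> dispersion k d a lam mu = 1"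
    then obtain mu where mu: "Re mu \<ge> 0" and e: "dispersion k d a lam mu = 1" by blast
    have lpos: "\<bar>lam\<bar> > 0" using lam L0 by linarith
    have "2*a/d > 0" using assms by simp
    then have lx: "\<bar>lam\<bar> > X" and la: "\<bar>lam\<bar> > 2*a/d" using lam X0 by (auto simp: L_def)
    have "lam \<noteq> 0" using lpos by simp
    from key[OF assms this mu] e
    have main: "1 \<le> (\<bar>1-k\<bar> * pi / (k*\<bar>lam\<bar>) + 2*\<bar>a * lam / (1 + d * lam\<^sup>2)\<bar>) / 2" by simp
    have t1: "\<bar>1-k\<bar> * pi / (k*\<bar>lam\<bar>) = X / \<bar>lam\<bar>" by (simp add: X_def)
    have t1': "X / \<bar>lam\<bar> < 1" using lx lpos by simp
    have dl: "d * lam\<^sup>2 > 0" using assms lpos by simp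
    have "\<bar>a * lam / (1 + d * lam\<^sup>2)\<bar> = a * \<bar>lam\<bar> / (1 + d * lam\<^sup>2)"
      using assms dl by (simp add: abs_mult)
    also have "\<dots> \<le> a * \<bar>lam\<bar> / (d * lam\<^sup>2)"
      using assms dl lpos by (intro divide_left_mono) (auto intro!: mult_pos_pos add_pos_pos)
    also have "\<dots> = a / (d * \<bar>lam\<bar>)"
      using lpos assms by (simp add: power2_eq_square field_simps)
    finally have t2: "2 * \<bar>a * lam / (1 + d * lam\<^sup>2)\<bar> \<le> 2 * a / (d * \<bar>lam\<bar>)" by simp
    have "2 * a / d < \<bar>lam\<bar>" using la .
    then have t2': "2 * a / (d * \<bar>lam\<bar>) < 1" using assms lpos by (simp add: field_simps)
    have gen: "False" if "1 \<le> (P + Q)/2" "P = R" "R < 1" "Q \<le> S" "S < 1" for P Q R S :: real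
      using that by (simp add: field_simps)
    show False by (rule gen[OF main t1 t1' t2 t2'])
  qed
qed

end
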